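(* Let $\phi\in\,]0,\pi[$, $M\in\mathbb{R}$, $N>0$, let $\Sigma$ be the Keplerian branch around ${\rm O}$ in the plane ${\rm O}xy$ with equation $r=My+N$, and let $g$ be the affine map $(x_1,y_1)\mapsto(x_3,y_3)$ defined by $x_1=x_3-M\frac{\cos\phi}{\sin\phi}y_3-N\cos\phi$, $y_1=\frac{1}{\sin\phi}y_3$. Let a Keplerian orbit describe $\Sigma$, with areal constant $C$ and energy $H$, and consider the Keplerian orbit describing $g(\Sigma)$ in the direction induced by $g$. Then its areal constant is $C\sin\phi$ (the areal constant is multiplied by $\sin\phi$, as the areas are), and its energy equals $H$.
   Context: In the Euclidean plane ${\rm O}xy$, $r=\sqrt{x^2+y^2}$, and Newton's system $\ddot q=-q/r^3$ for $q=(x,y)$. The areal constant (angular momentum) is $C=x\dot y-y\dot x$ and the energy is $H=\frac12(\dot x^2+\dot y^2)-\frac1r$, both constant along solutions. A Keplerian branch is the image of a solution; for $\gamma>0$, the set $r=\alpha x+\beta y+\gamma$ is a Keplerian branch, described by exactly two Keplerian orbits (differing in orientation), which have $C^2=\gamma$. The image $g(\Sigma)$ is the Keplerian branch $r=x\cos\phi+yM\sin\phi+N\sin^2\phi$; $g$ maps the oriented curve $\Sigma$ onto an oriented curve, and the image orbit is the Keplerian orbit describing $g(\Sigma)$ in that direction, time-parametrized as a solution of Newton's system. *)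

theory Defs
  imports "HOL-Analysis.Analysis"
begin

text \<open>A solution of Newton's system  q'' = -q/r^3  in the plane, q = (x,y), defined
for all times (solutions with nonzero areal constant are global).\<close>
definition newton_solution :: "(real \<Rightarrow> real) \<Rightarrow> (real \<Rightarrow> real) \<Rightarrow> bool" where
  "newton_solution x y \<longleftrightarrow>
     (\<forall>t. (x t, y t) \<noteq> (0, 0)) \<and>
     (\<forall>t. x differentiable (at t) \<and> y differentiable (at t)) \<and>
     (\<forall>t. (deriv x has_real_derivative
              - x t / (sqrt ((x t)\<^sup>2 + (y t)\<^sup>2)) ^ 3) (at t) \<and>
          (deriv y has_real_derivative
              - y t / (sqrt ((x t)\<^sup>2 + (y t)\<^sup>2)) ^ 3) (at t))"

definition areal_const :: "(real \<Rightarrow> real) \<Rightarrow> (real \<Rightarrow> real) \<Rightarrow> real \<Rightarrow> real" where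
  "areal_const x y t = x t * deriv y t - y t * deriv x t"

definition kepler_energy :: "(real \<Rightarrow> real) \<Rightarrow> (real \<Rightarrow> real) \<Rightarrow> real \<Rightarrow> real" where
  "kepler_energy x y t =
     ((deriv x t)\<^sup>2 + (deriv y t)\<^sup>2) / 2 - 1 / sqrt ((x t)\<^sup>2 + (y t)\<^sup>2)"

end

theory Submission
  imports Defs
begin



lemma newton_consts:
  assumes ns: "newton_solution x y"
  shows "\<exists>C a b. \<forall>t. areal_const x y t = C \<and> sqrt ((x t)\<^sup>2 + (y t)\<^sup>2) = C\<^sup>2 - a * x t - b * y t
           \<and> a\<^sup>2 + b\<^sup>2 = 1 + 2 * kepler_energy x y t * C\<^sup>2"
proof -
  define r where "r t = sqrt ((x t)\<^sup>2 + (y t)\<^sup>2)" for t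
  have rpos: "r t > 0" for t
  proof -
    have "(x t, y t) \<noteq> (0,0)" using ns unfolding newton_solution_def by blast
    hence "(x t)\<^sup>2 + (y t)\<^sup>2 > 0" by (simp add: sum_power2_gt_zero_iff)
    thus ?thesis unfolding r_def by simp
  qed
  have r2: "(r t)\<^sup>2 = (x t)\<^sup>2 + (y t)\<^sup>2" for t unfolding r_def by simp
  have dx: "(x has_real_derivative deriv x t) (at t)" for t
    using ns unfolding newton_solution_def using DERIV_deriv_iff_real_differentiable by blast
  have dy: "(y has_real_derivative deriv y t) (at t)" for t
    using ns unfolding newton_solution_def using DERIV_deriv_iff_real_differentiable by blast
  have dX: "(deriv x has_real_derivative - x t / (r t) ^ 3) (at t)" for t
    using ns unfolding newton_solution_def r_def by blast
  have dY: "(deriv y has_real_derivative - y t / (r t) ^ 3) (at t)" for t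
    using ns unfolding newton_solution_def r_def by blast
  have dr: "(r has_real_derivative (x t * deriv x t + y t * deriv y t) / r t) (at t)" for t
  proof -
    have "((\<lambda>t. sqrt ((x t)\<^sup>2 + (y t)\<^sup>2)) has_real_derivative
       inverse (sqrt ((x t)\<^sup>2 + (y t)\<^sup>2)) / 2 * (2 * x t * deriv x t + 2 * y t * deriv y t)) (at t)"
      apply (rule DERIV_chain2[where f=sqrt])
       apply (rule DERIV_real_sqrt) using rpos[of t] r2[of t] apply (simp add: r_def)
      using DERIV_add[OF DERIV_mult[OF dx dx] DERIV_mult[OF dy dy]]
      by (simp add: power2_eq_square algebra_simps)
    moreover have "inverse (sqrt ((x t)\<^sup>2 + (y t)\<^sup>2)) / 2 * (2 * x t * deriv x t + 2 * y t * deriv y t)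
       = (x t * deriv x t + y t * deriv y t) / r t" unfolding r_def by (simp add: divide_simps; simp add: algebra_simps)
    moreover have "r = (\<lambda>t. sqrt ((x t)\<^sup>2 + (y t)\<^sup>2))" by (intro ext) (simp add: r_def)
    ultimately show ?thesis by metis
  qed
  define C where "C = areal_const x y 0"
  have dC: "((\<lambda>t. x t * deriv y t - y t * deriv x t) has_real_derivative 0) (at t)" for t
    by (rule DERIV_cong[OF DERIV_diff[OF DERIV_mult[OF dx dY] DERIV_mult[OF dy dX]]]) (simp add: algebra_simps)
  have Cc: "areal_const x y t = C" for t
    unfolding C_def areal_const_def using DERIV_isconst_all[OF allI[OF dC]] by blast
  define A1 where "A1 t = deriv y t * C - x t / r t" for t
  define A2 where "A2 t = - deriv x t * C - y t / r t" for t
  have Ce: "C = x t * deriv y t - y t * deriv x t" for t using Cc[of t] unfolding areal_const_def by simp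
  have rne: "r t \<noteq> 0" for t using rpos[of t] by simp
  have dA1: "(A1 has_real_derivative 0) (at t)" for t
    unfolding A1_def[abs_def]
  proof (rule DERIV_cong[OF DERIV_diff[OF DERIV_mult[OF dY DERIV_const] DERIV_divide[OF dx dr rne]]])
    have "r t ^ 3 * ((- y t / (r t) ^ 3) * C + 0 * deriv y t -
       (deriv x t * r t - x t * ((x t * deriv x t + y t * deriv y t) / r t)) / (r t * r t))
        = - y t * C - (deriv x t * (r t)\<^sup>2 - x t * (x t * deriv x t + y t * deriv y t))"
      using rpos[of t] by (simp add: field_simps power2_eq_square power3_eq_cube)
    also have "\<dots> = 0" unfolding Ce[of t] r2 by (simp add: algebra_simps power2_eq_square)
    finally show "(- y t / (r t) ^ 3) * C + 0 * deriv y t -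
       (deriv x t * r t - x t * ((x t * deriv x t + y t * deriv y t) / r t)) / (r t * r t) = 0"
      using rpos[of t] by simp
  qed
  have dA2: "(A2 has_real_derivative 0) (at t)" for t
    unfolding A2_def[abs_def]
  proof (rule DERIV_cong[OF DERIV_diff[OF DERIV_mult[OF DERIV_minus[OF dX] DERIV_const] DERIV_divide[OF dy dr rne]]])
    have "r t ^ 3 * (- (- x t / (r t) ^ 3) * C + 0 * - deriv x t -
       (deriv y t * r t - y t * ((x t * deriv x t + y t * deriv y t) / r t)) / (r t * r t))
        = x t * C - (deriv y t * (r t)\<^sup>2 - y t * (x t * deriv x t + y t * deriv y t))"
      using rpos[of t] by (simp add: field_simps power2_eq_square power3_eq_cube)
    also have "\<dots> = 0" unfolding Ce[of t] r2 by (simp add: algebra_simps power2_eq_square)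
    finally show "- (- x t / (r t) ^ 3) * C + 0 * - deriv x t -
       (deriv y t * r t - y t * ((x t * deriv x t + y t * deriv y t) / r t)) / (r t * r t) = 0"
      using rpos[of t] by simp
  qed
  define a where "a = A1 0"
  define b where "b = A2 0"
  have ac: "A1 t = a" for t unfolding a_def using DERIV_isconst_all[OF allI[OF dA1]] by blast
  have bc: "A2 t = b" for t unfolding b_def using DERIV_isconst_all[OF allI[OF dA2]] by blast
  have "sqrt ((x t)\<^sup>2 + (y t)\<^sup>2) = C\<^sup>2 - a * x t - b * y t
           \<and> a\<^sup>2 + b\<^sup>2 = 1 + 2 * kepler_energy x y t * C\<^sup>2" for t
  proof -
    have e1: "r t = C\<^sup>2 - A1 t * x t - A2 t * y t"
    proof -
      have "C\<^sup>2 - A1 t * x t - A2 t * y t = C\<^sup>2 - C * (x t * deriv y t - y t * deriv x t) + ((x t)\<^sup>2 + (y t)\<^sup>2) / r t"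
        unfolding A1_def A2_def using rpos[of t] by (simp add: field_simps power2_eq_square)
      also have "\<dots> = r t" unfolding Ce[of t, symmetric] r2[of t, symmetric] using rpos[of t]
        by (simp add: power2_eq_square)
      finally show ?thesis by simp
    qed
    have e2: "(A1 t)\<^sup>2 + (A2 t)\<^sup>2 = 1 + 2 * kepler_energy x y t * C\<^sup>2"
    proof -
      have "(A1 t)\<^sup>2 + (A2 t)\<^sup>2 = C\<^sup>2 * ((deriv x t)\<^sup>2 + (deriv y t)\<^sup>2) - 2 * C * (x t * deriv y t - y t * deriv x t) / r t + ((x t)\<^sup>2 + (y t)\<^sup>2) / (r t)\<^sup>2"
        unfolding A1_def A2_def using rpos[of t] by (simp add: field_simps power2_eq_square)
      also have "\<dots> = C\<^sup>2 * ((deriv x t)\<^sup>2 + (deriv y t)\<^sup>2) - 2 * C\<^sup>2 / r t + 1"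
        unfolding Ce[of t, symmetric] r2[of t, symmetric] using rpos[of t] by (simp add: power2_eq_square)
      also have "\<dots> = 1 + 2 * kepler_energy x y t * C\<^sup>2"
        unfolding kepler_energy_def r_def[symmetric] by (simp add: field_simps)
      finally show ?thesis .
    qed
    show ?thesis using e1 e2 ac bc unfolding r_def by simp
  qed
  thus ?thesis using Cc by blast
qed



lemma deriv_sign:
  fixes f g \<tau> :: "real \<Rightarrow> real"
  assumes df: "(f has_real_derivative D1) (at t0)" and dg: "(g has_real_derivative D3) (at s0)"
    and mono: "strict_mono \<tau>" and cont: "isCont \<tau> s0" and t0: "\<tau> s0 = t0" and k: "k > 0"
    and gf: "\<forall>s. g s = k * f (\<tau> s)"
  shows "D1 * D3 \<ge> 0"
proof (cases "D1 = 0")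
  case True thus ?thesis by simp
next
  case False
  have q1: "((\<lambda>t. (f t - f t0) / (t - t0)) \<longlongrightarrow> D1) (at t0)"
    using df by (simp add: has_field_derivative_iff)
  have q3: "((\<lambda>s. (g s - g s0) / (s - s0)) \<longlongrightarrow> D3) (at s0)"
    using dg by (simp add: has_field_derivative_iff)
  have neq: "\<tau> s \<noteq> t0" if "s \<noteq> s0" for s
    using mono that t0 by (metis strict_mono_eq)
  have fl: "filterlim \<tau> (at t0) (at s0)"
  proof (rule filterlim_atI)
    show "(\<tau> \<longlongrightarrow> t0) (at s0)" using cont t0 isCont_def by metis
    show "\<forall>\<^sub>F x in at s0. \<tau> x \<noteq> t0" unfolding eventually_at_filter using neq by simp
  qed
  have "((\<lambda>s. (f (\<tau> s) - f t0) / (\<tau> s - t0)) \<longlongrightarrow> D1) (at s0)"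
    using filterlim_compose[OF q1 fl] .
  hence "((\<lambda>s. (f (\<tau> s) - f t0) / (\<tau> s - t0) * D1) \<longlongrightarrow> D1 * D1) (at s0)"
    by (intro tendsto_intros)
  moreover have "D1 * D1 > 0" using False by (metis not_real_square_gt_zero)
  ultimately have ev: "\<forall>\<^sub>F s in at s0. (f (\<tau> s) - f t0) / (\<tau> s - t0) * D1 > 0"
    using order_tendstoD(1) by blast
  have ev2: "\<forall>\<^sub>F s in at s0. 0 \<le> (g s - g s0) / (s - s0) * D1"
  proof -
    have "\<forall>\<^sub>F s in at s0. s \<noteq> s0" by (simp add: eventually_at_filter)
    with ev show ?thesis
    proof eventually_elim
      case (elim s)
      have p: "(\<tau> s - t0) / (s - s0) > 0"
      proof (cases "s < s0")
        case True hence "\<tau> s < t0" using mono t0 strict_monoD by blast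
        thus ?thesis using True by (simp add: divide_neg_neg)
      next
        case False hence "s > s0" using elim by simp
        hence "\<tau> s > t0" using mono t0 strict_monoD by blast
        thus ?thesis using \<open>s > s0\<close> by simp
      qed
      have "(g s - g s0) / (s - s0) * D1 = k * ((f (\<tau> s) - f t0) / (\<tau> s - t0) * D1) * ((\<tau> s - t0) / (s - s0))"
      proof -
        have dt: "\<tau> s - t0 \<noteq> 0" using neq[of s] elim by simp
        have ds: "s - s0 \<noteq> 0" using elim by simp
        have e: "g s - g s0 = k * (f (\<tau> s) - f t0)" using gf t0 by (simp add: algebra_simps)
        have key: "\<And>A dt ds::real. dt \<noteq> 0 \<Longrightarrow> ds \<noteq> 0 \<Longrightarrow> (k*A)/ds*D1 = k*(A/dt*D1)*(dt/ds)"
          by (simp add: field_simps)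
        show ?thesis unfolding e by (rule key[OF dt ds])
      qed
      also have "\<dots> > 0" using elim(1) by (rule mult_pos_pos[OF mult_pos_pos[OF k] p])
      finally show ?case by simp
    qed
  qed
  have "((\<lambda>s. (g s - g s0) / (s - s0) * D1) \<longlongrightarrow> D3 * D1) (at s0)"
    using q3 by (intro tendsto_intros)
  hence "0 \<le> D3 * D1" using ev2 by (rule tendsto_lowerbound) simp
  thus ?thesis by (simp add: mult.commute)
qed



lemma geo:
  fixes x y M N c s :: real
  assumes h: "sqrt (x\<^sup>2 + y\<^sup>2) = M * y + N" and sc: "s\<^sup>2 + c\<^sup>2 = 1"
  shows "sqrt ((x + c * (M * y + N))\<^sup>2 + (s * y)\<^sup>2) = c * x + M * y + N"
proof -
  define w where "w = M * y + N"
  have nn: "0 \<le> x\<^sup>2 + y\<^sup>2" by simp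
  have w0: "w \<ge> 0" using h real_sqrt_ge_zero[OF nn] unfolding w_def by simp
  have w2: "x\<^sup>2 + y\<^sup>2 = w\<^sup>2" using real_sqrt_pow2[OF nn] h unfolding w_def by simp
  have xw: "\<bar>x\<bar> \<le> w" using w2 w0
    by (metis abs_le_square_iff abs_of_nonneg le_add_same_cancel1 zero_le_power2)
  have c1: "\<bar>c\<bar> \<le> 1" using sc
    by (metis abs_le_square_iff abs_one le_add_same_cancel2 one_power2 zero_le_power2)
  have "\<bar>c * x\<bar> \<le> \<bar>x\<bar>" using c1 by (simp add: abs_mult mult_left_le_one_le)
  hence pos: "c * x + w \<ge> 0" using xw by linarith
  have "(x + c * w)\<^sup>2 + (s * y)\<^sup>2 = (c * x + w)\<^sup>2 + s\<^sup>2 * (x\<^sup>2 + y\<^sup>2 - w\<^sup>2)"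
  proof -
    have s2: "s\<^sup>2 = 1 - c\<^sup>2" using sc by simp
    show ?thesis unfolding power_mult_distrib s2 by (simp add: power2_eq_square algebra_simps)
  qed
  also have "\<dots> = (c * x + w)\<^sup>2" using w2 by simp
  finally show ?thesis using pos unfolding w_def by (simp add: add.assoc)
qed

theorem lemma9:
  fixes \<phi> M N :: real
    and x1 y1 x3 y3 :: "real \<Rightarrow> real"
    and \<tau> :: "real \<Rightarrow> real"
  assumes "0 < \<phi>" and "\<phi> < pi" and "N > 0"
    and "newton_solution x1 y1"
    and "(\<lambda>t. (x1 t, y1 t)) ` UNIV = {(x, y). sqrt (x\<^sup>2 + y\<^sup>2) = M * y + N}"
    and "newton_solution x3 y3"
    and "strict_mono \<tau>" and "continuous_on UNIV \<tau>" and "surj \<tau>"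
    and "\<forall>s. x1 (\<tau> s) = x3 s - M * (cos \<phi> / sin \<phi>) * y3 s - N * cos \<phi>
            \<and> y1 (\<tau> s) = (1 / sin \<phi>) * y3 s"
  shows "\<forall>s t. areal_const x3 y3 s = areal_const x1 y1 t * sin \<phi>
            \<and> kepler_energy x3 y3 s = kepler_energy x1 y1 t"
proof -
  obtain C1 a1 b1 where h1: "\<forall>t. areal_const x1 y1 t = C1 \<and> sqrt ((x1 t)\<^sup>2 + (y1 t)\<^sup>2) = C1\<^sup>2 - a1 * x1 t - b1 * y1 t
           \<and> a1\<^sup>2 + b1\<^sup>2 = 1 + 2 * kepler_energy x1 y1 t * C1\<^sup>2"
    using newton_consts[OF assms(4)] by blast
  obtain C3 a3 b3 where h3: "\<forall>t. areal_const x3 y3 t = C3 \<and> sqrt ((x3 t)\<^sup>2 + (y3 t)\<^sup>2) = C3\<^sup>2 - a3 * x3 t - b3 * y3 t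
           \<and> a3\<^sup>2 + b3\<^sup>2 = 1 + 2 * kepler_energy x3 y3 t * C3\<^sup>2"
    using newton_consts[OF assms(6)] by blast
  define c where "c = cos \<phi>"
  define s where "s = sin \<phi>"
  have spos: "s > 0" unfolding s_def using assms(1,2) by (rule sin_gt_zero)
  have sc: "s\<^sup>2 + c\<^sup>2 = 1" unfolding s_def c_def by simp
  have "s\<^sup>2 > 0" using spos by simp
  hence "c\<^sup>2 < 1" using sc by linarith
  hence cabs: "\<bar>c\<bar> < 1" by (simp add: abs_square_less_1)
  have tr: "x1 (\<tau> \<sigma>) = x3 \<sigma> - M * (c / s) * y3 \<sigma> - N * c \<and> y1 (\<tau> \<sigma>) = (1 / s) * y3 \<sigma>" for \<sigma>
    using assms(10) unfolding c_def s_def by blast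
  have y3e: "y3 \<sigma> = s * y1 (\<tau> \<sigma>)" for \<sigma> using tr[of \<sigma>] spos by simp
  have x3e: "x3 \<sigma> = x1 (\<tau> \<sigma>) + c * (M * y1 (\<tau> \<sigma>) + N)" for \<sigma>
    using tr[of \<sigma>] y3e[of \<sigma>] spos by (simp add: field_simps)
  have mem: "\<exists>t. x1 t = x \<and> y1 t = y" if "sqrt (x\<^sup>2 + y\<^sup>2) = M * y + N" for x y
  proof -
    have "(x, y) \<in> (\<lambda>t. (x1 t, y1 t)) ` UNIV" using assms(5) that by simp
    thus ?thesis by auto
  qed
  have L1: "M * y + N = C1\<^sup>2 - a1 * x - b1 * y" if "sqrt (x\<^sup>2 + y\<^sup>2) = M * y + N" for x y
    using mem[OF that] h1 that by metis
  have L3: "c * x + M * y + N = C3\<^sup>2 - a3 * (x + c * (M * y + N)) - b3 * (s * y)"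
    if hh: "sqrt (x\<^sup>2 + y\<^sup>2) = M * y + N" for x y
  proof -
    obtain t where t: "x1 t = x" "y1 t = y" using mem[OF hh] by blast
    obtain \<sigma> where "t = \<tau> \<sigma>" using assms(9) by (metis surjD)
    hence e: "x3 \<sigma> = x + c * (M * y + N)" "y3 \<sigma> = s * y" using x3e y3e t by auto
    have "sqrt ((x3 \<sigma>)\<^sup>2 + (y3 \<sigma>)\<^sup>2) = c * x + M * y + N" unfolding e by (rule geo[OF hh sc])
    thus ?thesis using h3 e by metis
  qed
  have P1: "sqrt (N\<^sup>2 + 0\<^sup>2) = M * 0 + N" using assms(3) by simp
  have P2: "sqrt ((-N)\<^sup>2 + 0\<^sup>2) = M * 0 + N" using assms(3) by simp
  define y0 where "y0 = N / (\<bar>M\<bar> + 2)"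
  define w where "w = M * y0 + N"
  define x0 where "x0 = sqrt (w\<^sup>2 - y0\<^sup>2)"
  have y0pos: "y0 > 0" unfolding y0_def using assms(3) by simp
  have Ny: "N = (\<bar>M\<bar> + 2) * y0" unfolding y0_def by simp
  have "- \<bar>M\<bar> * y0 \<le> M * y0" using y0pos by (intro mult_right_mono) auto
  hence wy: "w \<ge> 2 * y0" unfolding w_def using Ny by (simp add: algebra_simps)
  have "y0\<^sup>2 \<le> w\<^sup>2" using wy y0pos by (intro power_mono) auto
  hence "x0\<^sup>2 = w\<^sup>2 - y0\<^sup>2" unfolding x0_def by simp
  hence P3: "sqrt (x0\<^sup>2 + y0\<^sup>2) = M * y0 + N" using wy y0pos unfolding w_def by simp
  have e1: "N = C1\<^sup>2 - a1 * N" using L1[OF P1] by simp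
  have e2: "N = C1\<^sup>2 + a1 * N" using L1[OF P2] by simp
  have "a1 * N = 0" using e1 e2 by linarith
  hence a1: "a1 = 0" using assms(3) by simp
  have C1sq: "C1\<^sup>2 = N" using e1 a1 by simp
  have "M * y0 + N = C1\<^sup>2 - a1 * x0 - b1 * y0" using L1[OF P3] .
  hence "(M + b1) * y0 = 0" using a1 C1sq by (simp add: algebra_simps)
  hence b1: "b1 = - M" using y0pos by simp
  have e3: "c * N + N = C3\<^sup>2 - a3 * (N + c * N)" using L3[OF P1] by simp
  have e4: "- c * N + N = C3\<^sup>2 - a3 * (- N + c * N)" using L3[OF P2] by simp
  have "(c + a3) * N = 0" using e3 e4 by (simp add: algebra_simps)
  hence a3: "a3 = - c" using assms(3) by simp
  have C3sq: "C3\<^sup>2 = N * s\<^sup>2"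
  proof -
    have "C3\<^sup>2 = N * (1 - c\<^sup>2)" using e3 a3 by (simp add: algebra_simps power2_eq_square)
    thus ?thesis using sc by simp
  qed
  have e5: "c * x0 + M * y0 + N = C3\<^sup>2 - a3 * (x0 + c * (M * y0 + N)) - b3 * (s * y0)" using L3[OF P3] .
  have "(s * M + b3) * (s * y0) = 0"
  proof -
    have "M * y0 + N = N * s\<^sup>2 + c\<^sup>2 * (M * y0 + N) - b3 * (s * y0)"
      using e5 a3 C3sq by (simp add: algebra_simps power2_eq_square)
    hence "(1 - c\<^sup>2) * (M * y0 + N) = N * s\<^sup>2 - b3 * (s * y0)" by (simp add: algebra_simps)
    moreover have "1 - c\<^sup>2 = s\<^sup>2" using sc by simp
    ultimately have "s\<^sup>2 * (M * y0 + N) = N * s\<^sup>2 - b3 * (s * y0)" by simp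
    thus ?thesis by (simp add: algebra_simps power2_eq_square)
  qed
  hence b3: "b3 = - s * M" using spos y0pos by simp
  have H1: "2 * kepler_energy x1 y1 t * N = M\<^sup>2 - 1" for t
    using h1 a1 b1 C1sq by (metis add_0 add_diff_cancel_left' power2_minus zero_power2)
  have H3: "2 * kepler_energy x3 y3 t * N = M\<^sup>2 - 1" for t
  proof -
    have "c\<^sup>2 + s\<^sup>2 * M\<^sup>2 = 1 + 2 * kepler_energy x3 y3 t * (N * s\<^sup>2)"
      using h3 a3 b3 C3sq by (metis power2_minus power_mult_distrib mult.commute)
    hence "s\<^sup>2 * (M\<^sup>2 - 1) = s\<^sup>2 * (2 * kepler_energy x3 y3 t * N)" using sc by (simp add: algebra_simps)
    thus ?thesis using spos by simp
  qed
  have Heq: "kepler_energy x3 y3 \<sigma> = kepler_energy x1 y1 t" for \<sigma> t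
  proof -
    have "(kepler_energy x3 y3 \<sigma> - kepler_energy x1 y1 t) * (2 * N)
       = 2 * kepler_energy x3 y3 \<sigma> * N - 2 * kepler_energy x1 y1 t * N" by (simp add: algebra_simps)
    also have "\<dots> = 0" using H1[of t] H3[of \<sigma>] by linarith
    finally have "(kepler_energy x3 y3 \<sigma> - kepler_energy x1 y1 t) * (2 * N) = 0" .
    thus ?thesis using assms(3) by simp
  qed
  obtain t0 where t0: "x1 t0 = N" "y1 t0 = 0" using mem[OF P1] by blast
  obtain \<sigma>0 where \<sigma>0: "\<tau> \<sigma>0 = t0" using assms(9) by (metis surjD)
  have y30: "y3 \<sigma>0 = 0" using y3e[of \<sigma>0] \<sigma>0 t0 by simp
  have x30: "x3 \<sigma>0 = N + c * N" using x3e[of \<sigma>0] \<sigma>0 t0 by simp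
  have C1e: "C1 = N * deriv y1 t0" using h1 t0 unfolding areal_const_def by (metis diff_zero mult_zero_left)
  have C3e: "C3 = (N + c * N) * deriv y3 \<sigma>0" using h3 y30 x30 unfolding areal_const_def
    by (metis diff_zero mult_zero_left)
  have dy1: "(y1 has_real_derivative deriv y1 t0) (at t0)"
    using assms(4) unfolding newton_solution_def using DERIV_deriv_iff_real_differentiable by blast
  have dy3: "(y3 has_real_derivative deriv y3 \<sigma>0) (at \<sigma>0)"
    using assms(6) unfolding newton_solution_def using DERIV_deriv_iff_real_differentiable by blast
  have ic: "isCont \<tau> \<sigma>0" using assms(8) by (simp add: continuous_on_eq_continuous_at)
  have sgn: "deriv y1 t0 * deriv y3 \<sigma>0 \<ge> 0"
    by (rule deriv_sign[OF dy1 dy3 assms(7) ic \<sigma>0 spos]) (simp add: y3e)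
  have "0 < (1 + c) * N" using assms(3) cabs by (intro mult_pos_pos) (auto simp: abs_less_iff)
  hence "N + c * N > 0" by (simp add: algebra_simps)
  hence Npc: "N * (N + c * N) > 0" using assms(3) by simp
  have "C1 * C3 = (N * (N + c * N)) * (deriv y1 t0 * deriv y3 \<sigma>0)" using C1e C3e by simp
  hence CC: "C1 * C3 \<ge> 0" using Npc sgn by simp
  have "(C3 - s * C1) * (C3 + s * C1) = 0"
    using C3sq C1sq by (simp add: algebra_simps power2_eq_square)
  hence "C3 - s * C1 = 0 \<or> C3 + s * C1 = 0" by simp
  hence C3v: "C3 = s * C1"
  proof
    assume "C3 - s * C1 = 0" thus ?thesis by simp
  next
    assume "C3 + s * C1 = 0"
    hence "C3 = - s * C1" by simp
    hence "C1 * C3 = - s * C1\<^sup>2" by (simp add: power2_eq_square)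
    hence "C1 * C3 = - s * N" using C1sq by simp
    moreover have "s * N > 0" using spos assms(3) by simp
    ultimately have False using CC by linarith
    thus ?thesis ..
  qed
  show ?thesis using h1 h3 C3v Heq unfolding s_def by (simp add: mult.commute)
qed

end
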